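(* Let $\lambda$ be a composition of $n\ge2$. Then $d(U_\lambda,\tilde U_\lambda)\le\frac1n$, where $d$ is the metric of $\mathcal{U}^{(2)}$.
   Context: A composition $\lambda=(\lambda_1,\dots,\lambda_r)$ of $n$ has descent set $D_\lambda=\{\lambda_1,\lambda_1+\lambda_2,\dots,\lambda_1+\dots+\lambda_{r-1}\}$. $\mathcal{U}^{(2)}$ is the set of pairs $(U_\uparrow,U_\downarrow)$ of disjoint open subsets of $]0,1[$ with metric $d((U_\uparrow,U_\downarrow),(V_\uparrow,V_\downarrow))=\max(d_{Haus}(U_\uparrow^c,V_\uparrow^c),d_{Haus}(U_\downarrow^c,V_\downarrow^c))$, complements in $[0,1]$. With $I_s=[\frac{s-1}{n-1},\frac{s}{n-1}]$, $U_\lambda=(\mathrm{int}\bigcup_{s\notin D_\lambda}I_s,\ \mathrm{int}\bigcup_{s\in D_\lambda}I_s)$ ($1\le s\le n-1$). A cell $i\in[1,n]$ is a peak if $i\in D_\lambda\cup\{n\}$ and $i-1\notin D_\lambda$, and a valley if $i\notin D_\lambda$ and $i-1\in D_\lambda\cup\{0\}$; let $1=a_1<\dots<a_{t+1}=n$ be the peaks and valleys. The run paintbox is $\tilde U_\lambda=(\bigcup_{a_i\text{ valley}}]\frac{a_i-1}{n},\frac{a_{i+1}-1}{n}[,\ \bigcup_{a_i\text{ peak}}]\frac{a_i-1}{n},\frac{a_{i+1}-1}{n}[)$, with $a_{i+1}=n+1$ when $a_i=n$. *)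

theory Defs
  imports "HOL-Analysis.Analysis"
begin

definition is_composition :: "nat \<Rightarrow> nat list \<Rightarrow> bool" where
  "is_composition n lam \<longleftrightarrow> (\<forall>x\<in>set lam. 0 < x) \<and> sum_list lam = n"

definition descent_set :: "nat list \<Rightarrow> nat set" where
  "descent_set lam = {sum_list (take k lam) | k. 1 \<le> k \<and> k \<le> length lam - 1}"

definition haus_dist :: "real set \<Rightarrow> real set \<Rightarrow> real" where
  "haus_dist A B = max (SUP a\<in>A. infdist a B) (SUP b\<in>B. infdist b A)"

definition cmpl01 :: "real set \<Rightarrow> real set" where
  "cmpl01 U = {0..1} - U"

definition U2_dist :: "real set \<times> real set \<Rightarrow> real set \<times> real set \<Rightarrow> real" where
  "U2_dist U V = max (haus_dist (cmpl01 (fst U)) (cmpl01 (fst V)))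
                     (haus_dist (cmpl01 (snd U)) (cmpl01 (snd V)))"

definition I_int :: "nat \<Rightarrow> nat \<Rightarrow> real set" where
  "I_int n s = {(real s - 1) / (real n - 1) .. real s / (real n - 1)}"

definition U_comp :: "nat \<Rightarrow> nat list \<Rightarrow> real set \<times> real set" where
  "U_comp n lam =
     (interior (\<Union>s\<in>{s\<in>{1..n-1}. s \<notin> descent_set lam}. I_int n s),
      interior (\<Union>s\<in>{s\<in>{1..n-1}. s \<in> descent_set lam}. I_int n s))"

definition is_peak :: "nat \<Rightarrow> nat list \<Rightarrow> nat \<Rightarrow> bool" where
  "is_peak n lam i \<longleftrightarrow> i \<in> {1..n} \<and> i \<in> descent_set lam \<union> {n}
      \<and> \<not> (1 \<le> i \<and> i - 1 \<in> descent_set lam)"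

definition is_valley :: "nat \<Rightarrow> nat list \<Rightarrow> nat \<Rightarrow> bool" where
  "is_valley n lam i \<longleftrightarrow> i \<in> {1..n} \<and> i \<notin> descent_set lam
      \<and> (1 \<le> i \<and> i - 1 \<in> descent_set lam \<union> {0})"

definition pv_next :: "nat \<Rightarrow> nat list \<Rightarrow> nat \<Rightarrow> nat" where
  "pv_next n lam a = (if a = n then n + 1
      else Min {b. a < b \<and> (is_peak n lam b \<or> is_valley n lam b)})"

definition run_paintbox :: "nat \<Rightarrow> nat list \<Rightarrow> real set \<times> real set" where
  "run_paintbox n lam =
     ((\<Union>a\<in>{a. is_valley n lam a}.
          {(real a - 1) / real n <..< (real (pv_next n lam a) - 1) / real n}),
      (\<Union>a\<in>{a. is_peak n lam a}.
          {(real a - 1) / real n <..< (real (pv_next n lam a) - 1) / real n}))"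

end

theory Submission
  imports Defs
begin


definition cells :: "real \<Rightarrow> (nat \<Rightarrow> bool) \<Rightarrow> nat \<Rightarrow> real set" where
  "cells d T N = (\<Union>i\<in>{i\<in>{1..N}. T i}. {(real i - 1)/d .. real i/d})"

definition Qs :: "(nat \<Rightarrow> bool) \<Rightarrow> nat \<Rightarrow> real \<Rightarrow> bool" where
  "Qs T N v \<longleftrightarrow> (\<exists>i\<in>{1..N}. T i \<and> real i - 1 < v \<and> v < real i)
     \<or> (\<exists>i\<in>{1..N-1}. T i \<and> T (Suc i) \<and> v = real i)"

lemma mem_cells:
  assumes "d > 0"
  shows "z \<in> cells d T N \<longleftrightarrow> (\<exists>i\<in>{1..N}. T i \<and> real i - 1 \<le> z*d \<and> z*d \<le> real i)"
  using assms by (auto simp: cells_def field_simps)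

lemma interior_cells:
  assumes d: "d > 0"
  shows "x \<in> interior (cells d T N) \<longleftrightarrow> Qs T N (x*d)"
proof
  assume "Qs T N (x*d)"
  then show "x \<in> interior (cells d T N)"
    unfolding Qs_def
  proof (elim disjE bexE conjE)
    fix i assume i: "i \<in> {1..N}" "T i" "real i - 1 < x*d" "x*d < real i"
    let ?S = "{(real i - 1)/d <..< real i/d}"
    have "?S \<subseteq> cells d T N"
    proof
      fix z assume "z \<in> ?S"
      then have "real i - 1 < z*d" "z*d < real i" using d by (auto simp: field_simps)
      then show "z \<in> cells d T N" using i d by (auto simp: mem_cells)
    qed
    moreover have "x \<in> ?S" using i d by (auto simp: field_simps)
    ultimately show ?thesis using interior_maximal[OF _ open_greaterThanLessThan] by (metis subsetD)
  next
    fix i assume i: "i \<in> {1..N-1}" "T i" "T (Suc i)" "x*d = real i"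
    let ?S = "{(real i - 1)/d <..< (real i + 1)/d}"
    have "?S \<subseteq> cells d T N"
    proof
      fix z assume "z \<in> ?S"
      then have z: "real i - 1 < z*d" "z*d < real i + 1" using d by (auto simp: field_simps)
      show "z \<in> cells d T N"
      proof (cases "z*d \<le> real i")
        case True
        then show ?thesis using i z d by (auto simp: mem_cells)
      next
        case False
        then show ?thesis using i z d unfolding mem_cells[OF d]
          by (intro bexI[of _ "Suc i"]) auto
      qed
    qed
    moreover have "x \<in> ?S" using i d by (auto simp: field_simps)
    ultimately show ?thesis using interior_maximal[OF _ open_greaterThanLessThan] by (metis subsetD)
  qed
next
  assume "x \<in> interior (cells d T N)"
  then obtain e where e: "e > 0" "ball x e \<subseteq> cells d T N" by (auto simp: mem_interior)
  define t where "t = min (e/2) (1/(2*d))"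
  have t: "t > 0" "t < e" "t*d < 1" using e d by (auto simp: t_def min_def field_simps)
  have xin: "x \<in> cells d T N" using e by auto
  have xp: "x + t \<in> cells d T N" "x - t \<in> cells d T N" using e t by (auto simp: dist_real_def)
  obtain i where i: "i \<in> {1..N}" "T i" "real i - 1 \<le> x*d" "x*d \<le> real i"
    using xin d by (auto simp: mem_cells)
  have td: "(x+t)*d = x*d + t*d" "(x-t)*d = x*d - t*d" by (auto simp: algebra_simps)
  have tdp: "t*d > 0" using t d by simp
  consider "real i - 1 < x*d \<and> x*d < real i" | "x*d = real i" | "x*d = real i - 1" using i by linarith
  then show "Qs T N (x*d)"
  proof cases
    case 1 then show ?thesis using i unfolding Qs_def by blast
  next
    case 2
    obtain k where k: "k \<in> {1..N}" "T k" "real k - 1 \<le> (x+t)*d" "(x+t)*d \<le> real k"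
      using xp(1) d by (auto simp: mem_cells)
    have e1: "(x+t)*d = real i + t*d" using 2 td by simp
    have "real k - 1 \<le> real i + t*d" "real i + t*d \<le> real k" using k(3,4) unfolding e1 by auto
    then have "real k < real i + 2" "real i < real k" using tdp t by linarith+
    then have "k < i + 2" "i < k" by linarith+
    then have "k = Suc i" by linarith
    then show ?thesis using k i 2 unfolding Qs_def by (intro disjI2 bexI[of _ i]) auto
  next
    case 3
    obtain k where k: "k \<in> {1..N}" "T k" "real k - 1 \<le> (x-t)*d" "(x-t)*d \<le> real k"
      using xp(2) d by (auto simp: mem_cells)
    have e1: "(x-t)*d = real i - 1 - t*d" using 3 td by simp
    have "real k - 1 \<le> real i - 1 - t*d" "real i - 1 - t*d \<le> real k" using k(3,4) unfolding e1 by auto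
    then have "real k < real i" "real i < real k + 2" using tdp t by linarith+
    then have "k < i" "i < k + 2" by linarith+
    then have ki: "Suc k = i" by linarith
    then show ?thesis using k i 3 unfolding Qs_def by (intro disjI2 bexI[of _ k]) auto
  qed
qed


locale runs =
  fixes n :: nat and T :: "nat \<Rightarrow> bool" and pv :: "nat \<Rightarrow> bool" and nxt :: "nat \<Rightarrow> nat"
  assumes n2: "n \<ge> 2"
    and pv_def: "\<And>a. pv a \<longleftrightarrow> a \<in> {1..n} \<and> (a = 1 \<or> T a \<noteq> T (a-1))"
    and nxt_def: "\<And>a. nxt a = (if a = n then n+1 else Min {b. a < b \<and> pv b})"
    and Tn: "T n \<noteq> T (n-1)"
begin

lemma pv_n: "pv n" using n2 Tn pv_def by auto

lemma F1:
  assumes "pv a"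
  shows "a < nxt a \<and> nxt a \<le> n+1 \<and> (\<forall>b. a < b \<longrightarrow> b < nxt a \<longrightarrow> \<not> pv b) \<and> (nxt a \<le> n \<longrightarrow> pv (nxt a))"
proof (cases "a = n")
  case True then show ?thesis using nxt_def pv_def by auto
next
  case False
  let ?S = "{b. a < b \<and> pv b}"
  have an: "a < n" using assms False pv_def by auto
  have fin: "finite ?S" by (rule finite_subset[of _ "{..n}"]) (auto simp: pv_def)
  have nS: "n \<in> ?S" using an pv_n by auto
  have "Min ?S \<in> ?S" using fin nS by (intro Min_in) auto
  moreover have "Min ?S \<le> n" using fin nS by (intro Min_le) auto
  moreover have "\<forall>b. a < b \<longrightarrow> b < Min ?S \<longrightarrow> \<not> pv b" using fin Min_le by fastforce
  ultimately show ?thesis using False nxt_def by auto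
qed

lemma F2:
  assumes "pv a" shows "a + k < nxt a \<Longrightarrow> T (a + k) = T a"
proof (induction k)
  case 0 then show ?case by simp
next
  case (Suc k)
  have f: "a < nxt a" "nxt a \<le> n+1" "\<forall>b. a < b \<longrightarrow> b < nxt a \<longrightarrow> \<not> pv b" using F1[OF assms] by auto
  have "\<not> pv (a + Suc k)" using f Suc.prems by auto
  moreover have "a \<ge> 1" using assms pv_def by auto
  ultimately have "T (a + Suc k) = T (a + k)" using pv_def Suc.prems f by auto
  then show ?case using Suc by simp
qed

lemma F2':
  assumes "pv a" "a \<le> c" "c < nxt a" shows "T c = T a"
  using F2[OF assms(1), of "c - a"] assms by simp

lemma F3:
  assumes "1 \<le> c" "c \<le> n"
  shows "\<exists>a. pv a \<and> a \<le> c \<and> c < nxt a \<and> (\<forall>b. a < b \<longrightarrow> b \<le> c \<longrightarrow> \<not> pv b)"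
proof -
  let ?S = "{b. b \<le> c \<and> pv b}"
  have fin: "finite ?S" by auto
  have "1 \<in> ?S" using assms pv_def n2 by auto
  then have ne: "?S \<noteq> {}" by auto
  define a where "a = Max ?S"
  have a: "pv a" "a \<le> c" using Max_in[OF fin ne] a_def by auto
  have mx: "\<forall>b. a < b \<longrightarrow> b \<le> c \<longrightarrow> \<not> pv b" using Max_ge[OF fin] a_def by fastforce
  have "c < nxt a"
  proof (rule ccontr)
    assume "\<not> c < nxt a"
    then have "nxt a \<le> n" using assms by linarith
    then show False using F1[OF a(1)] mx \<open>\<not> c < nxt a\<close> by auto
  qed
  then show ?thesis using a mx by blast
qed

lemma runs_char:
  "y \<in> (\<Union>a\<in>{a. pv a \<and> T a}. {(real a - 1)/real n <..< (real (nxt a) - 1)/real n})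
    \<longleftrightarrow> Qs T n (y * real n)"
proof
  have np: "real n > 0" using n2 by simp
  assume "y \<in> (\<Union>a\<in>{a. pv a \<and> T a}. {(real a - 1)/real n <..< (real (nxt a) - 1)/real n})"
  then obtain a where a: "pv a" "T a" "(real a - 1)/real n < y" "y < (real (nxt a) - 1)/real n" by auto
  have yv: "real a - 1 < y * real n" "y * real n < real (nxt a) - 1" using a(3,4) np by (auto simp: field_simps)
  have f: "a < nxt a" "nxt a \<le> n+1" using F1[OF a(1)] by auto
  have a1: "a \<ge> 1" using a(1) pv_def by auto
  define k where "k = nat \<lfloor>y * real n\<rfloor>"
  have y0: "y * real n \<ge> 0" using yv a1 by simp
  have k: "real k \<le> y * real n" "y * real n < real k + 1" unfolding k_def using y0
    by (simp_all add: of_nat_nat)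
  show "Qs T n (y * real n)"
  proof (cases "y * real n = real k")
    case True
    have ak: "a \<le> k" using yv True by linarith
    have kn: "k + 1 < nxt a" using yv True by linarith
    have "T k = T a" using F2'[OF a(1) ak] kn by simp
    moreover have "T (Suc k) = T a" using F2'[OF a(1), of "Suc k"] ak kn by simp
    moreover have "k \<in> {1..n-1}" using \<open>a \<le> k\<close> \<open>k+1 < nxt a\<close> a1 f by auto
    ultimately show ?thesis using True a(2) unfolding Qs_def by (intro disjI2 bexI[of _ k]) auto
  next
    case False
    have ak: "a \<le> k + 1" using yv k by linarith
    have kn: "k + 1 < nxt a" using yv k by linarith
    have "T (k+1) = T a" using F2'[OF a(1) ak kn] .
    moreover have "k + 1 \<in> {1..n}" using \<open>k+1 < nxt a\<close> f by auto
    ultimately show ?thesis using False k a(2) unfolding Qs_def by (intro disjI1 bexI[of _ "k+1"]) auto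
  qed
next
  have np: "real n > 0" using n2 by simp
  assume "Qs T n (y * real n)"
  then show "y \<in> (\<Union>a\<in>{a. pv a \<and> T a}. {(real a - 1)/real n <..< (real (nxt a) - 1)/real n})"
    unfolding Qs_def
  proof (elim disjE bexE conjE)
    fix i assume i: "i \<in> {1..n}" "T i" "real i - 1 < y * real n" "y * real n < real i"
    obtain a where a: "pv a" "a \<le> i" "i < nxt a" using F3[of i] i by auto
    have "T a" using F2'[OF a] i by simp
    moreover have "real a - 1 < y * real n" "y * real n < real (nxt a) - 1" using a i by linarith+
    ultimately show ?thesis using a np by (intro UN_I[of a]) (auto simp: field_simps)
  next
    fix i assume i: "i \<in> {1..n-1}" "T i" "T (Suc i)" "y * real n = real i"
    obtain a where a: "pv a" "a \<le> Suc i" "Suc i < nxt a" "\<forall>b. a < b \<longrightarrow> b \<le> Suc i \<longrightarrow> \<not> pv b"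
    proof -
      have "1 \<le> Suc i" "Suc i \<le> n" using i n2 by auto
      from F3[OF this] show ?thesis using that by blast
    qed
    have "\<not> pv (Suc i)" using i pv_def by auto
    then have "a \<noteq> Suc i" using a by auto
    then have ai: "a \<le> i" using a by auto
    have "T a" using F2'[OF a(1) ai] a i by simp
    moreover have "real a - 1 < y * real n" "y * real n < real (nxt a) - 1" using ai a i by linarith+
    ultimately show ?thesis using a np by (intro UN_I[of a]) (auto simp: field_simps)
  qed
qed

end

lemma Qs_E:
  assumes "Qs T N v"
  obtains (c1) i where "i \<in> {1..N}" "T i" "real i - 1 < v" "v < real i"
    | (c2) i where "i \<in> {1..N-1}" "T i" "T (Suc i)" "v = real i"
  using assms unfolding Qs_def by blast

lemma dir_a:
  assumes n2: "n \<ge> 2" and rel: "\<And>i. 1 \<le> i \<Longrightarrow> i < n \<Longrightarrow> TP i = TU i" and rn: "TP n = (\<not> TU (n-1))"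
    and u: "0 \<le> u" "u \<le> real n - 1" and q: "Qs TP n u"
  shows "Qs TU (n-1) u"
  using q
proof (cases rule: Qs_E)
  case (c1 i)
  note i = c1
  have "real i < real n" using i u by linarith
  then have "i < n" by simp
  then show ?thesis using i rel unfolding Qs_def by (intro disjI1 bexI[of _ i]) auto
next
  case (c2 i)
  note i = c2
  show ?thesis
  proof (cases "i = n - 1")
    case True
    then have "Suc i = n" using i n2 by auto
    then show ?thesis using i rel[of i] rn True n2 by auto
  next
    case False
    then have "Suc i < n" using i by auto
    then show ?thesis using i rel[of i] rel[of "Suc i"] unfolding Qs_def by (intro disjI2 bexI[of _ i]) auto
  qed
qed

lemma dir_b:
  assumes n2: "n \<ge> 2" and rel: "\<And>i. 1 \<le> i \<Longrightarrow> i < n \<Longrightarrow> TP i = TU i"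
    and q: "Qs TU (n-1) u"
  shows "Qs TP n u"
  using q
proof (cases rule: Qs_E)
  case (c1 i)
  note i = c1
  then show ?thesis using rel[of i] unfolding Qs_def by (intro disjI1 bexI[of _ i]) auto
next
  case (c2 i)
  note i = c2
  then show ?thesis using rel[of i] rel[of "Suc i"] unfolding Qs_def by (intro disjI2 bexI[of _ i]) auto
qed

lemma not_top:
  assumes "n \<ge> 2" shows "\<not> Qs TU (n-1) (real n - 1)"
  using assms unfolding Qs_def by (auto simp: of_nat_diff)

lemma not_zero: "\<not> Qs T N 0"
  unfolding Qs_def by auto

lemma haus_le:
  assumes "a0 \<in> A" "b0 \<in> B" "\<And>x. x \<in> A \<Longrightarrow> \<exists>y\<in>B. dist x y \<le> r" "\<And>y. y \<in> B \<Longrightarrow> \<exists>x\<in>A. dist y x \<le> r"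
  shows "haus_dist A B \<le> r"
proof -
  have "(SUP a\<in>A. infdist a B) \<le> r"
  proof (rule cSUP_least)
    show "A \<noteq> {}" using assms by auto
    fix x assume "x \<in> A" then obtain y where "y \<in> B" "dist x y \<le> r" using assms by blast
    then show "infdist x B \<le> r" using infdist_le2 by blast
  qed
  moreover have "(SUP b\<in>B. infdist b A) \<le> r"
  proof (rule cSUP_least)
    show "B \<noteq> {}" using assms by auto
    fix x assume "x \<in> B" then obtain y where "y \<in> A" "dist x y \<le> r" using assms by blast
    then show "infdist x A \<le> r" using infdist_le2 by blast
  qed
  ultimately show ?thesis unfolding haus_dist_def by simp
qed

lemma haus_comp:
  assumes n2: "n \<ge> 2" and rel: "\<And>i. 1 \<le> i \<Longrightarrow> i < n \<Longrightarrow> TP i = TU i" and rn: "TP n = (\<not> TU (n-1))"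
  shows "haus_dist {x\<in>{0..1}. \<not> Qs TU (n-1) (x*(real n - 1))} {y\<in>{0..1}. \<not> Qs TP n (y*real n)} \<le> 1 / real n"
proof (rule haus_le)
  have np: "real n \<ge> 2" using n2 by simp
  show "0 \<in> {x\<in>{0..1}. \<not> Qs TU (n-1) (x*(real n - 1))}" using not_zero by simp
  show "0 \<in> {y\<in>{0..1}. \<not> Qs TP n (y*real n)}" using not_zero by simp
  fix x assume x: "x \<in> {x\<in>{0..1}. \<not> Qs TU (n-1) (x*(real n - 1))}"
  define y where "y = x * (real n - 1) / real n"
  have yn: "y * real n = x * (real n - 1)" using np by (simp add: y_def)
  have u: "0 \<le> x * (real n - 1)" "x * (real n - 1) \<le> real n - 1" using x np
    by (auto simp: mult_le_cancel_right1 mult_nonneg_nonneg)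
  have "\<not> Qs TP n (y * real n)" using dir_a[OF n2 rel rn u] x yn by auto
  moreover have "y \<in> {0..1}" using u np by (auto simp: y_def field_simps)
  moreover have "dist x y \<le> 1 / real n"
  proof -
    have "x - y = x / real n" using np by (simp add: y_def field_simps)
    moreover have "0 \<le> x / real n" using x np by simp
    moreover have "x / real n \<le> 1 / real n" using x np by (simp add: divide_right_mono)
    ultimately show ?thesis by (simp add: dist_real_def)
  qed
  ultimately show "\<exists>y\<in>{y\<in>{0..1}. \<not> Qs TP n (y*real n)}. dist x y \<le> 1 / real n" by blast
next
  have np: "real n \<ge> 2" using n2 by simp
  fix y assume y: "y \<in> {y\<in>{0..1}. \<not> Qs TP n (y*real n)}"
  show "\<exists>x\<in>{x\<in>{0..1}. \<not> Qs TU (n-1) (x*(real n - 1))}. dist y x \<le> 1 / real n"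
  proof (cases "y * real n \<le> real n - 1")
    case True
    define x where "x = y * real n / (real n - 1)"
    have xn: "x * (real n - 1) = y * real n" using np by (simp add: x_def)
    have "\<not> Qs TU (n-1) (x * (real n - 1))" using dir_b[OF n2 rel] y xn by auto
    moreover have "x \<in> {0..1}" using True y np by (auto simp: x_def field_simps)
    moreover have "dist y x \<le> 1 / real n"
    proof -
      have "x - y = y / (real n - 1)" using np by (simp add: x_def field_simps)
      moreover have "y / (real n - 1) \<le> 1 / real n" using True y np by (auto simp: field_simps)
      moreover have "0 \<le> y / (real n - 1)" using y np by simp
      ultimately show ?thesis by (simp add: dist_real_def)
    qed
    ultimately show ?thesis by blast
  next
    case False
    have "\<not> Qs TU (n-1) (1 * (real n - 1))" using not_top[OF n2] by simp
    moreover have "dist y 1 \<le> 1 / real n" using False y np by (auto simp: dist_real_def field_simps)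
    ultimately show ?thesis by (intro bexI[of _ 1]) auto
  qed
qed


lemma sum_pos_ge1: "\<forall>x\<in>set xs. 0 < (x::nat) \<Longrightarrow> xs \<noteq> [] \<Longrightarrow> 1 \<le> sum_list xs"
  by (cases xs) auto

lemma D_sub:
  assumes "is_composition n lam"
  shows "descent_set lam \<subseteq> {1..n-1}"
proof
  fix s assume "s \<in> descent_set lam"
  then obtain k where k: "s = sum_list (take k lam)" "1 \<le> k" "k \<le> length lam - 1"
    unfolding descent_set_def by blast
  have pos: "\<forall>x\<in>set lam. 0 < x" and sn: "sum_list lam = n" using assms unfolding is_composition_def by auto
  have "1 \<le> sum_list (take k lam)"
    using pos k by (intro sum_pos_ge1) (auto dest: in_set_takeD)
  moreover have "1 \<le> sum_list (drop k lam)"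
    using pos k by (intro sum_pos_ge1) (auto dest: in_set_dropD)
  moreover have "sum_list (take k lam) + sum_list (drop k lam) = n"
    using sn by (metis append_take_drop_id sum_list_append)
  ultimately show "s \<in> {1..n-1}" using k by auto
qed

definition upc :: "nat \<Rightarrow> nat set \<Rightarrow> nat \<Rightarrow> bool" where
  "upc n D i \<longleftrightarrow> (i < n \<and> i \<notin> D) \<or> (i = n \<and> n - 1 \<in> D)"

lemma valley_iff:
  assumes n2: "n \<ge> 2" and Ds: "descent_set lam \<subseteq> {1..n-1}"
  shows "is_valley n lam a \<longleftrightarrow> (a \<in> {1..n} \<and> (a = 1 \<or> upc n (descent_set lam) a \<noteq> upc n (descent_set lam) (a-1))) \<and> upc n (descent_set lam) a"
  using assms unfolding is_valley_def upc_def
  by (cases "a = 1"; cases "a = n"; auto)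

lemma peak_iff:
  assumes n2: "n \<ge> 2" and Ds: "descent_set lam \<subseteq> {1..n-1}"
  shows "is_peak n lam a \<longleftrightarrow> (a \<in> {1..n} \<and> (a = 1 \<or> upc n (descent_set lam) a \<noteq> upc n (descent_set lam) (a-1))) \<and> \<not> upc n (descent_set lam) a"
  using assms unfolding is_peak_def upc_def
  by (cases "a = 1"; cases "a = n"; auto)


theorem lemma11:
  fixes n :: nat and lam :: "nat list"
  assumes "n \<ge> 2" and "is_composition n lam"
  shows "U2_dist (U_comp n lam) (run_paintbox n lam) \<le> 1 / real n"
proof -
  note n2 = assms(1)
  define D where "D = descent_set lam"
  have Ds: "D \<subseteq> {1..n-1}" using D_sub[OF assms(2)] D_def by simp
  define up where "up = upc n D"
  define pv where "pv = (\<lambda>a. is_peak n lam a \<or> is_valley n lam a)"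
  have pv_eq: "\<And>a. pv a \<longleftrightarrow> a \<in> {1..n} \<and> (a = 1 \<or> up a \<noteq> up (a-1))"
    using valley_iff[OF n2 Ds[unfolded D_def]] peak_iff[OF n2 Ds[unfolded D_def]]
    unfolding pv_def up_def D_def by blast
  have Tn: "up n \<noteq> up (n-1)" using n2 by (auto simp: up_def upc_def)
  interpret R1: runs n up pv "pv_next n lam"
    by unfold_locales (use n2 pv_eq Tn in \<open>auto simp: pv_next_def pv_def\<close>)
  interpret R2: runs n "\<lambda>a. \<not> up a" pv "pv_next n lam"
    by unfold_locales (use n2 pv_eq Tn in \<open>auto simp: pv_next_def pv_def\<close>)
  have valleys: "{a. is_valley n lam a} = {a. pv a \<and> up a}"
    using valley_iff[OF n2 Ds[unfolded D_def]] pv_eq unfolding up_def D_def by blast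
  have peaks: "{a. is_peak n lam a} = {a. pv a \<and> \<not> up a}"
    using peak_iff[OF n2 Ds[unfolded D_def]] pv_eq unfolding up_def D_def by blast
  have P1: "cmpl01 (fst (run_paintbox n lam)) = {y\<in>{0..1}. \<not> Qs up n (y*real n)}"
    unfolding cmpl01_def run_paintbox_def fst_conv valleys using R1.runs_char by blast
  have P2: "cmpl01 (snd (run_paintbox n lam)) = {y\<in>{0..1}. \<not> Qs (\<lambda>a. \<not> up a) n (y*real n)}"
    unfolding cmpl01_def run_paintbox_def snd_conv peaks using R2.runs_char by blast
  have dpos: "real n - 1 > 0" using n2 by simp
  have "fst (U_comp n lam) = interior (cells (real n - 1) (\<lambda>s. s \<notin> D) (n-1))"
    by (simp add: U_comp_def cells_def I_int_def D_def)
  then have U1: "cmpl01 (fst (U_comp n lam)) = {x\<in>{0..1}. \<not> Qs (\<lambda>s. s \<notin> D) (n-1) (x*(real n - 1))}"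
    unfolding cmpl01_def using interior_cells[OF dpos] by auto
  have "snd (U_comp n lam) = interior (cells (real n - 1) (\<lambda>s. s \<in> D) (n-1))"
    by (simp add: U_comp_def cells_def I_int_def D_def)
  then have U2: "cmpl01 (snd (U_comp n lam)) = {x\<in>{0..1}. \<not> Qs (\<lambda>s. s \<in> D) (n-1) (x*(real n - 1))}"
    unfolding cmpl01_def using interior_cells[OF dpos] by auto
  have h1: "haus_dist {x\<in>{0..1}. \<not> Qs (\<lambda>s. s \<notin> D) (n-1) (x*(real n - 1))} {y\<in>{0..1}. \<not> Qs up n (y*real n)} \<le> 1 / real n"
    by (rule haus_comp[OF n2]) (auto simp: up_def upc_def)
  have h2: "haus_dist {x\<in>{0..1}. \<not> Qs (\<lambda>s. s \<in> D) (n-1) (x*(real n - 1))} {y\<in>{0..1}. \<not> Qs (\<lambda>a. \<not> up a) n (y*real n)} \<le> 1 / real n"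
    by (rule haus_comp[OF n2]) (auto simp: up_def upc_def)
  show ?thesis unfolding U2_dist_def U1 U2 P1 P2 using h1 h2 by simp
qed

end
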